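(* Let $X$, $Y$, $Z$ be topological spaces with $Z$ regular, and let $S$ denote $S(X\times Y,Z)$ with the cross-open topology. Define $e:X\times Y\times S\to Z$, $e_1:(X\times S)\times Y\to Z$ and $e_2:X\times(Y\times S)\to Z$ by $e(x,y,s)=e_1((x,s),y)=e_2(x,(y,s))=s(x,y)$. Then: (1) $e$ (as a function of three variables), $e_1$ and $e_2$ (as functions of two variables) are separately continuous; (2) if moreover $X$ and $Y$ are completely regular spaces without isolated points and $Z$ is a Hausdorff topological vector space with more than one point, then $e$, $e_1$ and $e_2$ are discontinuous at every point of their domains.
   Context: For topological spaces $X,Y,Z$, a function $f:X\times Y\to Z$ is separately continuous if $y\mapsto f(x,y)$ is continuous for every $x\in X$ and $x\mapsto f(x,y)$ is continuous for every $y\in Y$; a function of three variables is separately continuous if it is continuous in each variable when the other two are fixed. $S(X\times Y,Z)$ denotes the set of all separately continuous functions $X\times Y\to Z$. For $p=(a,b)\in X\times Y$, the cross of $p$ is $\mathrm{cr}\{p\}=(\{a\}\times Y)\cup(X\times\{b\})$. The cross-open topology on $S(X\times Y,Z)$ is the topology generated by the subbase consisting of the sets $\{s\in S(X\times Y,Z): s(A)\subseteq W\}$, where $W$ is open in $Z$ and $A=\overline{G}\cap C$ for some $p\in X\times Y$, $C=\mathrm{cr}\{p\}$, and $G$ an open subset of $C$ (in the subspace topology of $C$; $\overline{G}$ is the closure in $X\times Y$). *)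

theory Defs
  imports "HOL-Analysis.Analysis"
begin

definition sep_cont2 :: "'a topology \<Rightarrow> 'b topology \<Rightarrow> 'c topology \<Rightarrow> ('a \<times> 'b \<Rightarrow> 'c) \<Rightarrow> bool" where
  "sep_cont2 A B Z f \<longleftrightarrow>
     (\<forall>x\<in>topspace A. continuous_map B Z (\<lambda>y. f (x, y))) \<and>
     (\<forall>y\<in>topspace B. continuous_map A Z (\<lambda>x. f (x, y)))"

definition sep_cont3 :: "'a topology \<Rightarrow> 'b topology \<Rightarrow> 'd topology \<Rightarrow> 'c topology
      \<Rightarrow> ('a \<Rightarrow> 'b \<Rightarrow> 'd \<Rightarrow> 'c) \<Rightarrow> bool" where
  "sep_cont3 A B C Z f \<longleftrightarrow>
     (\<forall>y\<in>topspace B. \<forall>w\<in>topspace C. continuous_map A Z (\<lambda>x. f x y w)) \<and>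
     (\<forall>x\<in>topspace A. \<forall>w\<in>topspace C. continuous_map B Z (\<lambda>y. f x y w)) \<and>
     (\<forall>x\<in>topspace A. \<forall>y\<in>topspace B. continuous_map C Z (\<lambda>w. f x y w))"

text \<open>S(X \<times> Y, Z): separately continuous functions on topspace X \<times> topspace Y
  (made unique by requiring them to be extensional, i.e. undefined outside).\<close>
definition SC :: "'a topology \<Rightarrow> 'b topology \<Rightarrow> 'c topology \<Rightarrow> ('a \<times> 'b \<Rightarrow> 'c) set" where
  "SC X Y Z = {s. s \<in> extensional (topspace X \<times> topspace Y) \<and> sep_cont2 X Y Z s}"

definition cross :: "'a topology \<Rightarrow> 'b topology \<Rightarrow> 'a \<times> 'b \<Rightarrow> ('a \<times> 'b) set" where
  "cross X Y p = ({fst p} \<times> topspace Y) \<union> (topspace X \<times> {snd p})"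

text \<open>The cross-open topology on S(X \<times> Y, Z), generated by the subbase of the sets
  {s. s(A) \<subseteq> W}, W open in Z, A = closure(G) \<inter> C, C = cross of p, G open in C.
  (The whole carrier is added to the subbase so that the topspace is exactly SC X Y Z.)\<close>
definition cross_open_topology :: "'a topology \<Rightarrow> 'b topology \<Rightarrow> 'c topology
      \<Rightarrow> ('a \<times> 'b \<Rightarrow> 'c) topology" where
  "cross_open_topology X Y Z = topology_generated_by
     (insert (SC X Y Z)
       {{s \<in> SC X Y Z. s ` A \<subseteq> W} | W A. openin Z W \<and>
          (\<exists>p \<in> topspace X \<times> topspace Y. \<exists>G.
              openin (subtopology (prod_topology X Y) (cross X Y p)) G \<and>
              A = (prod_topology X Y closure_of G) \<inter> cross X Y p)})"

definition continuous_at_pt :: "'a topology \<Rightarrow> 'b topology \<Rightarrow> ('a \<Rightarrow> 'b) \<Rightarrow> 'a \<Rightarrow> bool" where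
  "continuous_at_pt T U f p \<longleftrightarrow> p \<in> topspace T \<and> f p \<in> topspace U \<and>
     (\<forall>V. openin U V \<and> f p \<in> V \<longrightarrow>
        (\<exists>N. openin T N \<and> p \<in> N \<and> (\<forall>q\<in>N. f q \<in> V)))"

definition no_isolated_points :: "'a topology \<Rightarrow> bool" where
  "no_isolated_points X \<longleftrightarrow> (\<forall>x\<in>topspace X. \<not> openin X {x})"

definition real_tvs :: "'c topology \<Rightarrow> ('c \<Rightarrow> 'c \<Rightarrow> 'c) \<Rightarrow> (real \<Rightarrow> 'c \<Rightarrow> 'c) \<Rightarrow> 'c \<Rightarrow> bool" where
  "real_tvs Z add smul zero \<longleftrightarrow>
     (let V = topspace Z in
      zero \<in> V \<and>
      (\<forall>u\<in>V. \<forall>v\<in>V. add u v \<in> V) \<and>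
      (\<forall>a. \<forall>v\<in>V. smul a v \<in> V) \<and>
      (\<forall>u\<in>V. \<forall>v\<in>V. \<forall>w\<in>V. add (add u v) w = add u (add v w)) \<and>
      (\<forall>u\<in>V. \<forall>v\<in>V. add u v = add v u) \<and>
      (\<forall>v\<in>V. add zero v = v) \<and>
      (\<forall>v\<in>V. \<exists>w\<in>V. add v w = zero) \<and>
      (\<forall>a b. \<forall>v\<in>V. smul a (smul b v) = smul (a * b) v) \<and>
      (\<forall>v\<in>V. smul 1 v = v) \<and>
      (\<forall>a. \<forall>u\<in>V. \<forall>v\<in>V. smul a (add u v) = add (smul a u) (smul a v)) \<and>
      (\<forall>a b. \<forall>v\<in>V. smul (a + b) v = add (smul a v) (smul b v)) \<and>
      continuous_map (prod_topology Z Z) Z (\<lambda>(u, v). add u v) \<and>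
      continuous_map (prod_topology euclideanreal Z) Z (\<lambda>(a, v). smul a v))"

end

theory Submission
  imports Defs
begin


lemma topspace_cot: "topspace (cross_open_topology X Y Z) = SC X Y Z"
  unfolding cross_open_topology_def by auto

lemma cont_pointwise:
  assumes "\<And>p. p \<in> topspace T \<Longrightarrow> f p \<in> topspace U"
    and "\<And>p W. p \<in> topspace T \<Longrightarrow> openin U W \<Longrightarrow> f p \<in> W \<Longrightarrow> \<exists>N. openin T N \<and> p \<in> N \<and> (\<forall>q\<in>N. f q \<in> W)"
  shows "continuous_map T U f"
proof -
  have "openin T {x \<in> topspace T. f x \<in> W}" if W: "openin U W" for W
  proof (subst openin_subopen, intro ballI)
    fix p assume p: "p \<in> {x \<in> topspace T. f x \<in> W}"
    then obtain N where N: "openin T N" "p \<in> N" "\<forall>q\<in>N. f q \<in> W" using assms(2) W by blast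
    have "N \<subseteq> {x \<in> topspace T. f x \<in> W}" using N openin_subset[OF N(1)] by blast
    then show "\<exists>T'. openin T T' \<and> p \<in> T' \<and> T' \<subseteq> {x \<in> topspace T. f x \<in> W}"
      using N by blast
  qed
  then show ?thesis unfolding continuous_map_def using assms(1) by blast
qed

lemma SC_in_topspace:
  assumes "s \<in> SC X Y Z" "x \<in> topspace X" "y \<in> topspace Y"
  shows "s (x,y) \<in> topspace Z"
  using assms unfolding SC_def sep_cont2_def by (auto dest: continuous_map_image_subset_topspace)

lemma key:
  assumes reg: "regular_space Z" and s0: "s0 \<in> SC X Y Z" and a: "a \<in> topspace X" and b: "b \<in> topspace Y"
    and W: "openin Z W" and sW: "s0 (a,b) \<in> W"
  shows "\<exists>U V N. openin X U \<and> a \<in> U \<and> openin Y V \<and> b \<in> V \<and>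
     openin (cross_open_topology X Y Z) N \<and> s0 \<in> N \<and>
     (\<forall>t\<in>N. \<forall>x\<in>U. t (x,b) \<in> W) \<and> (\<forall>t\<in>N. \<forall>y\<in>V. t (a,y) \<in> W)"
proof -
  have ca: "continuous_map Y Z (\<lambda>y. s0 (a,y))" and cb: "continuous_map X Z (\<lambda>x. s0 (x,b))"
    using s0 a b unfolding SC_def sep_cont2_def by auto
  have nb: "neighbourhood_base_of (closedin Z) Z" using reg neighbourhood_base_of_closedin by blast
  have "\<exists>U V. openin Z U \<and> closedin Z V \<and> s0 (a,b) \<in> U \<and> U \<subseteq> V \<and> V \<subseteq> W"
    using nb W sW unfolding neighbourhood_base_of by simp
  then obtain W' C where W': "openin Z W'" "closedin Z C" "s0 (a,b) \<in> W'" "W' \<subseteq> C" "C \<subseteq> W"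
    by blast
  have clW: "Z closure_of W' \<subseteq> W"
    using W' closure_of_minimal by blast
  define U where "U = {x \<in> topspace X. s0 (x,b) \<in> W'}"
  define V where "V = {y \<in> topspace Y. s0 (a,y) \<in> W'}"
  have U: "openin X U" "a \<in> U" unfolding U_def using cb W' a openin_continuous_map_preimage by auto
  have V: "openin Y V" "b \<in> V" unfolding V_def using ca W' b openin_continuous_map_preimage by auto
  define Cr where "Cr = cross X Y (a,b)"
  define G where "G = (U \<times> V) \<inter> Cr"
  define A where "A = (prod_topology X Y closure_of G) \<inter> Cr"
  define N where "N = {s \<in> SC X Y Z. s ` A \<subseteq> W}"
  have Gop: "openin (subtopology (prod_topology X Y) Cr) G"
    unfolding G_def openin_subtopology using U V by (intro exI[of _ "U \<times> V"]) (simp add: openin_prod_Times_iff)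
  have "N \<in> {{s \<in> SC X Y Z. s ` A \<subseteq> W} | W A. openin Z W \<and>
          (\<exists>p \<in> topspace X \<times> topspace Y. \<exists>G.
              openin (subtopology (prod_topology X Y) (cross X Y p)) G \<and>
              A = (prod_topology X Y closure_of G) \<inter> cross X Y p)}"
    unfolding mem_Collect_eq
  proof (intro exI conjI)
    show "N = {s \<in> SC X Y Z. s ` A \<subseteq> W}" by (simp add: N_def)
    show "openin Z W" by (rule W)
    show "\<exists>p \<in> topspace X \<times> topspace Y. \<exists>G.
              openin (subtopology (prod_topology X Y) (cross X Y p)) G \<and>
              A = (prod_topology X Y closure_of G) \<inter> cross X Y p"
      using a b Gop unfolding A_def Cr_def by blast
  qed
  then have Nop: "openin (cross_open_topology X Y Z) N"
    unfolding cross_open_topology_def by (intro topology_generated_by_Basis) blast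
  have GA: "G \<subseteq> A"
    unfolding A_def G_def using U V openin_subset[OF U(1)] openin_subset[OF V(1)]
    by (auto intro!: closure_of_subset[THEN subsetD])
  have clG: "prod_topology X Y closure_of G \<subseteq> (X closure_of U) \<times> (Y closure_of V)"
    unfolding G_def closure_of_Times[symmetric] by (intro closure_of_mono) auto
  have s0N: "s0 \<in> N" unfolding N_def
  proof (intro CollectI conjI subsetI s0)
    fix z assume "z \<in> s0 ` A"
    then obtain q where q: "q \<in> A" "z = s0 q" by auto
    then have qc: "q \<in> (X closure_of U) \<times> (Y closure_of V)" "q \<in> Cr" using clG unfolding A_def by auto
    show "z \<in> W"
    proof (cases "fst q = a")
      case True
      then have "snd q \<in> Y closure_of V" using qc by auto
      then have "s0 (a, snd q) \<in> Z closure_of ((\<lambda>y. s0 (a,y)) ` V)"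
        using continuous_map_image_closure_subset[OF ca] by blast
      also have "\<dots> \<subseteq> Z closure_of W'" by (intro closure_of_mono) (auto simp: V_def)
      finally show ?thesis using clW q True by (metis prod.collapse subsetD)
    next
      case False
      then have "snd q = b" using qc unfolding Cr_def cross_def by auto
      have "fst q \<in> X closure_of U" using qc by auto
      then have "s0 (fst q, b) \<in> Z closure_of ((\<lambda>x. s0 (x,b)) ` U)"
        using continuous_map_image_closure_subset[OF cb] by blast
      also have "\<dots> \<subseteq> Z closure_of W'" by (intro closure_of_mono) (auto simp: U_def)
      finally show ?thesis using clW q \<open>snd q = b\<close> by (metis prod.collapse subsetD)
    qed
  qed
  have h1: "\<forall>t\<in>N. \<forall>x\<in>U. t (x,b) \<in> W"
  proof (intro ballI)
    fix t x assume "t \<in> N" "x \<in> U"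
    then have "(x,b) \<in> G" unfolding G_def Cr_def cross_def using V U openin_subset[OF U(1)] by auto
    then show "t (x,b) \<in> W" using GA \<open>t \<in> N\<close> unfolding N_def by auto
  qed
  have h2: "\<forall>t\<in>N. \<forall>y\<in>V. t (a,y) \<in> W"
  proof (intro ballI)
    fix t y assume "t \<in> N" "y \<in> V"
    then have "(a,y) \<in> G" unfolding G_def Cr_def cross_def using V U openin_subset[OF V(1)] by auto
    then show "t (a,y) \<in> W" using GA \<open>t \<in> N\<close> unfolding N_def by auto
  qed
  show ?thesis
    apply (rule exI[of _ U], rule exI[of _ V], rule exI[of _ N])
    using U V Nop s0N h1 h2 by simp
qed



lemma part1:
  assumes reg: "regular_space Z"
  shows "sep_cont3 X Y (cross_open_topology X Y Z) Z (\<lambda>x y s. s (x, y))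
     \<and> sep_cont2 (prod_topology X (cross_open_topology X Y Z)) Y Z (\<lambda>((x, s), y). s (x, y))
     \<and> sep_cont2 X (prod_topology Y (cross_open_topology X Y Z)) Z (\<lambda>(x, (y, s)). s (x, y))"
proof -
  let ?S = "cross_open_topology X Y Z"
  have r1: "continuous_map Y Z (\<lambda>y. s (x,y))" if "s \<in> SC X Y Z" "x \<in> topspace X" for s x
    using that unfolding SC_def sep_cont2_def by auto
  have r2: "continuous_map X Z (\<lambda>x. s (x,y))" if "s \<in> SC X Y Z" "y \<in> topspace Y" for s y
    using that unfolding SC_def sep_cont2_def by auto
  have r3: "continuous_map ?S Z (\<lambda>s. s (x,y))" if xy: "x \<in> topspace X" "y \<in> topspace Y" for x y
  proof (rule cont_pointwise)
    fix p assume "p \<in> topspace ?S" then show "p (x,y) \<in> topspace Z"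
      using xy SC_in_topspace by (auto simp: topspace_cot)
  next
    fix p W assume "p \<in> topspace ?S" "openin Z W" "p (x,y) \<in> W"
    then obtain U V N where "openin X U \<and> x \<in> U \<and> openin Y V \<and> y \<in> V \<and>
     openin ?S N \<and> p \<in> N \<and> (\<forall>t\<in>N. \<forall>x'\<in>U. t (x',y) \<in> W) \<and> (\<forall>t\<in>N. \<forall>y'\<in>V. t (x,y') \<in> W)"
      using key[OF reg, of p X Y x y W] xy by (auto simp: topspace_cot)
    then show "\<exists>N. openin ?S N \<and> p \<in> N \<and> (\<forall>q\<in>N. q (x, y) \<in> W)" by blast
  qed
  have r4: "continuous_map (prod_topology X ?S) Z (\<lambda>q. snd q (fst q, y))" if xy: "y \<in> topspace Y" for y
  proof (rule cont_pointwise)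
    fix p assume "p \<in> topspace (prod_topology X ?S)" then show "snd p (fst p,y) \<in> topspace Z"
      using xy SC_in_topspace by (auto simp: topspace_cot)
  next
    fix p W assume p: "p \<in> topspace (prod_topology X ?S)" "openin Z W" "snd p (fst p,y) \<in> W"
    then obtain U V N where UVN: "openin X U \<and> fst p \<in> U \<and> openin Y V \<and> y \<in> V \<and>
     openin ?S N \<and> snd p \<in> N \<and> (\<forall>t\<in>N. \<forall>x'\<in>U. t (x',y) \<in> W) \<and> (\<forall>t\<in>N. \<forall>y'\<in>V. t (fst p,y') \<in> W)"
      using key[OF reg, of "snd p" X Y "fst p" y W] xy by (auto simp: topspace_cot)
    show "\<exists>N. openin (prod_topology X ?S) N \<and> p \<in> N \<and> (\<forall>q\<in>N. snd q (fst q, y) \<in> W)"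
    proof (intro exI conjI ballI)
      show "openin (prod_topology X ?S) (U \<times> N)" using UVN by (simp add: openin_prod_Times_iff)
      show "p \<in> U \<times> N" using UVN by (simp add: mem_Times_iff)
      fix q assume "q \<in> U \<times> N" then show "snd q (fst q, y) \<in> W" using UVN by (auto simp: mem_Times_iff)
    qed
  qed
  have r5: "continuous_map (prod_topology Y ?S) Z (\<lambda>q. snd q (x, fst q))" if xy: "x \<in> topspace X" for x
  proof (rule cont_pointwise)
    fix p assume "p \<in> topspace (prod_topology Y ?S)" then show "snd p (x, fst p) \<in> topspace Z"
      using xy SC_in_topspace by (auto simp: topspace_cot)
  next
    fix p W assume p: "p \<in> topspace (prod_topology Y ?S)" "openin Z W" "snd p (x, fst p) \<in> W"
    then obtain U V N where UVN: "openin X U \<and> x \<in> U \<and> openin Y V \<and> fst p \<in> V \<and>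
     openin ?S N \<and> snd p \<in> N \<and> (\<forall>t\<in>N. \<forall>x'\<in>U. t (x',fst p) \<in> W) \<and> (\<forall>t\<in>N. \<forall>y'\<in>V. t (x,y') \<in> W)"
      using key[OF reg, of "snd p" X Y x "fst p" W] xy by (auto simp: topspace_cot)
    show "\<exists>N. openin (prod_topology Y ?S) N \<and> p \<in> N \<and> (\<forall>q\<in>N. snd q (x, fst q) \<in> W)"
    proof (intro exI conjI ballI)
      show "openin (prod_topology Y ?S) (V \<times> N)" using UVN by (simp add: openin_prod_Times_iff)
      show "p \<in> V \<times> N" using UVN by (simp add: mem_Times_iff)
      fix q assume "q \<in> V \<times> N" then show "snd q (x, fst q) \<in> W" using UVN by (auto simp: mem_Times_iff)
    qed
  qed
  show ?thesis
    unfolding sep_cont3_def sep_cont2_def topspace_cot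
  proof (intro conjI ballI)
    fix y w assume "y \<in> topspace Y" "w \<in> SC X Y Z"
    then show "continuous_map X Z (\<lambda>x. w (x, y))" using r2 by blast
  next
    fix x w assume "x \<in> topspace X" "w \<in> SC X Y Z"
    then show "continuous_map Y Z (\<lambda>y. w (x, y))" using r1 by blast
  next
    fix x y assume "x \<in> topspace X" "y \<in> topspace Y"
    then show "continuous_map ?S Z (\<lambda>w. w (x, y))" using r3 by blast
  next
    fix xs assume "xs \<in> topspace (prod_topology X ?S)"
    then show "continuous_map Y Z (\<lambda>y. case (xs, y) of (x, xa) \<Rightarrow> (case x of (x, s) \<Rightarrow> \<lambda>y. s (x, y)) xa)"
      using r1 by (cases xs) (simp add: topspace_cot)
  next
    fix y assume "y \<in> topspace Y"
    then show "continuous_map (prod_topology X ?S) Z (\<lambda>x. case (x, y) of (x, xa) \<Rightarrow> (case x of (x, s) \<Rightarrow> \<lambda>y. s (x, y)) xa)"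
      using r4[of y] by (simp add: split_beta)
  next
    fix ys assume "ys \<in> topspace (prod_topology Y ?S)"
    then show "continuous_map X Z (\<lambda>xa. case (xa, ys) of (x, y, s) \<Rightarrow> s (x, y))"
      using r2 by (cases ys) (simp add: topspace_cot)
  next
    fix x assume x: "x \<in> topspace X"
    have eq: "(\<lambda>q. snd q (x, fst q)) = (\<lambda>y. case (x, y) of (x, y, s) \<Rightarrow> s (x, y))"
      by (rule ext) (simp add: split_beta)
    show "continuous_map (prod_topology Y ?S) Z (\<lambda>y. case (x, y) of (x, y, s) \<Rightarrow> s (x, y))"
      using r5[OF x] unfolding eq .
  qed
qed




lemma gen_fin:
  assumes "generate_topology_on S N"
  shows "\<forall>s\<in>N. \<exists>F. finite F \<and> F \<subseteq> S \<and> s \<in> \<Inter>F \<and> \<Inter>F \<subseteq> N"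
  using assms
proof (induction rule: generate_topology_on.induct)
  case Empty then show ?case by simp
next
  case (Int a b)
  show ?case
  proof
    fix s assume "s \<in> a \<inter> b"
    then have "s \<in> a" "s \<in> b" by auto
    then obtain F1 F2 where F1: "finite F1" "F1 \<subseteq> S" "s \<in> \<Inter>F1" "\<Inter>F1 \<subseteq> a"
      and F2: "finite F2" "F2 \<subseteq> S" "s \<in> \<Inter>F2" "\<Inter>F2 \<subseteq> b"
      using Int.IH(1)[rule_format, OF \<open>s \<in> a\<close>] Int.IH(2)[rule_format, OF \<open>s \<in> b\<close>] by blast
    have "\<Inter>(F1 \<union> F2) = \<Inter>F1 \<inter> \<Inter>F2" by (rule Inter_Un_distrib)
    then show "\<exists>F. finite F \<and> F \<subseteq> S \<and> s \<in> \<Inter>F \<and> \<Inter>F \<subseteq> a \<inter> b"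
      using F1 F2 by (intro exI[of _ "F1 \<union> F2"]) auto
  qed
next
  case (UN K)
  show ?case
  proof
    fix s assume "s \<in> \<Union>K"
    then obtain k where k: "k \<in> K" "s \<in> k" by blast
    have "\<exists>F. finite F \<and> F \<subseteq> S \<and> s \<in> \<Inter>F \<and> \<Inter>F \<subseteq> k"
      using UN.IH[OF k(1)] k(2) by (rule bspec)
    then obtain F where F: "finite F" "F \<subseteq> S" "s \<in> \<Inter>F" "\<Inter>F \<subseteq> k" by (elim exE conjE)
    have "\<Inter>F \<subseteq> \<Union>K" using F(4) k(1) by blast
    then show "\<exists>F. finite F \<and> F \<subseteq> S \<and> s \<in> \<Inter>F \<and> \<Inter>F \<subseteq> \<Union>K" using F(1-3) by (intro exI[of _ F] conjI)
  qed
next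
  case (Basis s')
  then show ?case by (intro ballI exI[of _ "{s'}"]) auto
qed



lemma infinite_open:
  assumes t1: "t1_space X" and ni: "no_isolated_points X" and U: "openin X U" and u: "u \<in> U"
  shows "infinite U"
proof
  assume fin: "finite U"
  have sub: "U \<subseteq> topspace X" using openin_subset[OF U] .
  have "closedin X (U - {u})" using t1 fin sub unfolding t1_space_closedin_finite by auto
  then have "openin X (U - (U - {u}))" using U by (simp add: openin_diff)
  moreover have "U - (U - {u}) = {u}" using u by auto
  ultimately have "openin X {u}" by simp
  then show False using ni u sub unfolding no_isolated_points_def by auto
qed



lemma tvs_facts:
  assumes tvs: "real_tvs Z add smul zero" and c: "c \<in> topspace Z"
  shows "smul 0 c = zero" "add c zero = c" "add zero c = c" "smul 1 c = c"
proof -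
  let ?V = "topspace Z"
  note T = tvs[unfolded real_tvs_def Let_def]
  have ax1: "zero \<in> ?V" using T by (elim conjE) assumption
  have ax2: "\<forall>u\<in>?V. \<forall>v\<in>?V. add u v \<in> ?V" using T by (elim conjE) assumption
  have ax3: "\<forall>a. \<forall>v\<in>?V. smul a v \<in> ?V" using T by (elim conjE) assumption
  have ax4: "\<forall>u\<in>?V. \<forall>v\<in>?V. \<forall>w\<in>?V. add (add u v) w = add u (add v w)" using T by (elim conjE) assumption
  have ax5: "\<forall>u\<in>?V. \<forall>v\<in>?V. add u v = add v u" using T by (elim conjE) assumption
  have ax6: "\<forall>v\<in>?V. add zero v = v" using T by (elim conjE) assumption
  have ax7: "\<forall>v\<in>?V. \<exists>w\<in>?V. add v w = zero" using T by (elim conjE) assumption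
  have ax8: "\<forall>v\<in>?V. smul 1 v = v" using T by (elim conjE) assumption
  have ax9: "\<forall>a b. \<forall>v\<in>?V. smul (a + b) v = add (smul a v) (smul b v)" using T by (elim conjE) assumption
  note ax = ax1 ax2 ax3 ax4 ax5 ax6 ax7 ax8 ax9
  define u where "u = smul 0 c"
  have uV: "u \<in> ?V" using ax3 c unfolding u_def by blast
  have "smul (0+0) c = add (smul 0 c) (smul 0 c)" by (rule ax9[rule_format, OF c])
  then have uu: "add u u = u" unfolding u_def by simp
  obtain w where w: "w \<in> ?V" "add u w = zero" using ax7[rule_format, OF uV] by blast
  have "zero = add (add u u) w" using uu w by simp
  also have "\<dots> = add u zero" using ax(4)[rule_format, OF uV uV w(1)] w(2) by simp
  also have "\<dots> = add zero u" by (rule ax(5)[rule_format, OF uV ax(1)])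
  also have "\<dots> = u" by (rule ax(6)[rule_format, OF uV])
  finally show "smul 0 c = zero" unfolding u_def by (rule sym)
  have "add c zero = add zero c" by (rule ax(5)[rule_format, OF c ax(1)])
  then show "add c zero = c" using ax(6)[rule_format, OF c] by simp
  show "add zero c = c" by (rule ax6[rule_format, OF c])
  show "smul 1 c = c" by (rule ax8[rule_format, OF c])
qed




lemma tvs_cont:
  assumes tvs: "real_tvs Z add smul zero" and r: "continuous_map T euclideanreal r"
    and u: "continuous_map T Z u" and c: "c \<in> topspace Z"
  shows "continuous_map T Z (\<lambda>q. add (smul (1 - r q) (u q)) (smul (r q) c))"
proof -
  have sm: "continuous_map (prod_topology euclideanreal Z) Z (\<lambda>(a,v). smul a v)"
    using tvs[unfolded real_tvs_def Let_def] by (elim conjE) assumption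
  have ad: "continuous_map (prod_topology Z Z) Z (\<lambda>(u,v). add u v)"
    using tvs[unfolded real_tvs_def Let_def] by (elim conjE) assumption
  have one: "continuous_map T euclideanreal (\<lambda>q. 1::real)" by simp
  have r1: "continuous_map T euclideanreal (\<lambda>q. 1 - r q)"
    by (rule continuous_map_diff[OF one r])
  have cc: "continuous_map T Z (\<lambda>q. c)" using c by simp
  have p1: "continuous_map T (prod_topology euclideanreal Z) (\<lambda>q. (1 - r q, u q))"
    by (rule continuous_map_pairedI[OF r1 u])
  have p2: "continuous_map T (prod_topology euclideanreal Z) (\<lambda>q. (r q, c))"
    by (rule continuous_map_pairedI[OF r cc])
  have c1: "continuous_map T Z (\<lambda>q. smul (1 - r q) (u q))"
    using continuous_map_compose[OF p1 sm] by (simp add: o_def)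
  have c2: "continuous_map T Z (\<lambda>q. smul (r q) c)"
    using continuous_map_compose[OF p2 sm] by (simp add: o_def)
  have p3: "continuous_map T (prod_topology Z Z) (\<lambda>q. (smul (1 - r q) (u q), smul (r q) c))"
    by (rule continuous_map_pairedI[OF c1 c2])
  show ?thesis
    using continuous_map_compose[OF p3 ad] by (simp add: o_def)
qed




lemma main2:
  assumes crX: "completely_regular_space X" and t1X: "t1_space X" and niX: "no_isolated_points X"
    and crY: "completely_regular_space Y" and t1Y: "t1_space Y" and niY: "no_isolated_points Y"
    and tvs: "real_tvs Z add smul zero"
    and s0: "s0 \<in> SC X Y Z"
    and U: "openin X U" "x0 \<in> U" and V: "openin Y V" "y0 \<in> V"
    and M: "openin (cross_open_topology X Y Z) M" "s0 \<in> M"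
    and c: "c \<in> topspace Z"
  shows "\<exists>x\<in>U. \<exists>y\<in>V. \<exists>t\<in>M. t (x,y) = c"
proof -
  define Sub where "Sub = {{s \<in> SC X Y Z. s ` A \<subseteq> W} | W A. openin Z W \<and>
          (\<exists>p \<in> topspace X \<times> topspace Y. \<exists>G.
              openin (subtopology (prod_topology X Y) (cross X Y p)) G \<and>
              A = (prod_topology X Y closure_of G) \<inter> cross X Y p)}"
  have gM: "generate_topology_on (insert (SC X Y Z) Sub) M"
    using M(1) unfolding cross_open_topology_def Sub_def openin_topology_generated_by_iff .
  obtain F where F: "finite F" "F \<subseteq> insert (SC X Y Z) Sub" "s0 \<in> \<Inter>F" "\<Inter>F \<subseteq> M"
    using gen_fin[OF gM, rule_format, OF M(2)] by (elim exE conjE)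
  have x0X: "x0 \<in> topspace X" using U openin_subset by blast
  have y0Y: "y0 \<in> topspace Y" using V openin_subset by blast
  have "\<forall>B\<in>F. \<exists>p. p \<in> topspace X \<times> topspace Y \<and>
          (B = SC X Y Z \<or> (\<exists>W A. B = {s \<in> SC X Y Z. s ` A \<subseteq> W} \<and> A \<subseteq> cross X Y p))"
  proof
    fix B assume "B \<in> F"
    then have "B \<in> insert (SC X Y Z) Sub" using F(2) by blast
    then show "\<exists>p. p \<in> topspace X \<times> topspace Y \<and>
          (B = SC X Y Z \<or> (\<exists>W A. B = {s \<in> SC X Y Z. s ` A \<subseteq> W} \<and> A \<subseteq> cross X Y p))"
    proof
      assume "B = SC X Y Z"
      then show ?thesis using x0X y0Y by blast
    next
      assume "B \<in> Sub"
      then obtain W A p G where WA: "B = {s \<in> SC X Y Z. s ` A \<subseteq> W}" "p \<in> topspace X \<times> topspace Y"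
         "A = (prod_topology X Y closure_of G) \<inter> cross X Y p"
        unfolding Sub_def by blast
      have "A \<subseteq> cross X Y p" using WA(3) by blast
      then show ?thesis using WA(1,2) by blast
    qed
  qed
  then obtain P where P: "\<forall>B\<in>F. P B \<in> topspace X \<times> topspace Y \<and>
          (B = SC X Y Z \<or> (\<exists>W A. B = {s \<in> SC X Y Z. s ` A \<subseteq> W} \<and> A \<subseteq> cross X Y (P B)))"
    by (rule bchoice[elim_format]) blast
  define FX where "FX = fst ` P ` F"
  define FY where "FY = snd ` P ` F"
  have finFX: "finite FX" and finFY: "finite FY" unfolding FX_def FY_def using F(1) by auto
  have PF: "P B \<in> topspace X \<times> topspace Y" if "B \<in> F" for B using P that by blast
  have FXs: "FX \<subseteq> topspace X" unfolding FX_def using PF by (auto simp: mem_Times_iff)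
  have FYs: "FY \<subseteq> topspace Y" unfolding FY_def using PF by (auto simp: mem_Times_iff)
  have "infinite U" by (rule infinite_open[OF t1X niX U])
  then have "infinite (U - FX)" using finFX by (rule Diff_infinite_finite[rotated])
  then have "U - FX \<noteq> {}" by (intro notI) simp
  then obtain x where x: "x \<in> U" "x \<notin> FX" by blast
  have "infinite V" by (rule infinite_open[OF t1Y niY V])
  then have "infinite (V - FY)" using finFY by (rule Diff_infinite_finite[rotated])
  then have "V - FY \<noteq> {}" by (intro notI) simp
  then obtain y where y: "y \<in> V" "y \<notin> FY" by blast
  have xX: "x \<in> topspace X" using x U openin_subset by blast
  have yY: "y \<in> topspace Y" using y V openin_subset by blast
  have clX: "closedin X FX" using t1X finFX FXs unfolding t1_space_closedin_finite by blast
  have clY: "closedin Y FY" using t1Y finFY FYs unfolding t1_space_closedin_finite by blast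
  have condX: "closedin X FX \<and> x \<in> topspace X - FX" using clX xX x(2) by blast
  have "\<forall>S x. closedin X S \<and> x \<in> topspace X - S \<longrightarrow> (\<exists>f::_\<Rightarrow>real. continuous_map X (top_of_set {0..1}) f \<and> f x = 0 \<and> (f ` S \<subseteq> {1}))"
    using crX unfolding completely_regular_space_def .
  from this[rule_format, OF condX] obtain f where f: "continuous_map X (top_of_set {0..1::real}) f" "f x = 0" "f ` FX \<subseteq> {1}"
    by (elim exE conjE) (rule that)
  have condY: "closedin Y FY \<and> y \<in> topspace Y - FY" using clY yY y(2) by blast
  have "\<forall>S x. closedin Y S \<and> x \<in> topspace Y - S \<longrightarrow> (\<exists>f::_\<Rightarrow>real. continuous_map Y (top_of_set {0..1}) f \<and> f x = 0 \<and> (f ` S \<subseteq> {1}))"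
    using crY unfolding completely_regular_space_def .
  from this[rule_format, OF condY] obtain g where g: "continuous_map Y (top_of_set {0..1::real}) g" "g y = 0" "g ` FY \<subseteq> {1}"
    by (elim exE conjE) (rule that)
  have fc: "continuous_map X euclideanreal f" by (rule conjunct1[OF iffD1[OF continuous_map_in_subtopology f(1)]])
  have gc: "continuous_map Y euclideanreal g" by (rule conjunct1[OF iffD1[OF continuous_map_in_subtopology g(1)]])
  define h where "h q = (1 - f (fst q)) * (1 - g (snd q))" for q
  define t where "t q = (if q \<in> topspace X \<times> topspace Y
        then add (smul (1 - h q) (s0 q)) (smul (h q) c) else undefined)" for q
  have s0c1: "continuous_map Y Z (\<lambda>y. s0 (x', y))" if "x' \<in> topspace X" for x'
    using s0 that unfolding SC_def sep_cont2_def by blast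
  have s0c2: "continuous_map X Z (\<lambda>x. s0 (x, y'))" if "y' \<in> topspace Y" for y'
    using s0 that unfolding SC_def sep_cont2_def by blast
  have tSC: "t \<in> SC X Y Z"
    unfolding SC_def sep_cont2_def
  proof (intro CollectI conjI ballI)
    show "t \<in> extensional (topspace X \<times> topspace Y)"
      unfolding extensional_def t_def by simp
  next
    fix x' assume x': "x' \<in> topspace X"
    have hc: "continuous_map Y euclideanreal (\<lambda>y. h (x', y))"
      unfolding h_def fst_conv snd_conv
      by (intro continuous_map_real_mult continuous_map_diff gc) simp_all
    show "continuous_map Y Z (\<lambda>y. t (x', y))"
      by (rule continuous_map_eq[OF tvs_cont[OF tvs hc s0c1[OF x'] c]]) (simp add: t_def x')
  next
    fix y' assume y': "y' \<in> topspace Y"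
    have hc: "continuous_map X euclideanreal (\<lambda>x. h (x, y'))"
      unfolding h_def fst_conv snd_conv
      by (intro continuous_map_real_mult continuous_map_diff fc) simp_all
    show "continuous_map X Z (\<lambda>x. t (x, y'))"
      by (rule continuous_map_eq[OF tvs_cont[OF tvs hc s0c2[OF y'] c]]) (simp add: t_def y')
  qed
  have txy: "t (x,y) = c"
  proof -
    have "h (x,y) = 1" unfolding h_def using f(2) g(2) by simp
    moreover have "s0 (x,y) \<in> topspace Z" by (rule SC_in_topspace[OF s0 xX yY])
    ultimately show ?thesis unfolding t_def using xX yY tvs_facts[OF tvs] c by simp
  qed
  have tM: "t \<in> \<Inter>F"
  proof
    fix B assume B: "B \<in> F"
    have PB: "P B \<in> topspace X \<times> topspace Y"
       "B = SC X Y Z \<or> (\<exists>W A. B = {s \<in> SC X Y Z. s ` A \<subseteq> W} \<and> A \<subseteq> cross X Y (P B))"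
      using P B by blast+
    have s0B: "s0 \<in> B" using F(3) B by blast
    show "t \<in> B"
    proof (cases "B = SC X Y Z")
      case True then show ?thesis using tSC by simp
    next
      case False
      then obtain W A where WA: "B = {s \<in> SC X Y Z. s ` A \<subseteq> W}" "A \<subseteq> cross X Y (P B)"
        using PB(2) by blast
      have "t q \<in> W" if q: "q \<in> A" for q
      proof -
        have qc: "q \<in> cross X Y (P B)" using q WA(2) by blast
        have qXY: "q \<in> topspace X \<times> topspace Y"
          using qc PB(1) unfolding cross_def by auto
        have "fst (P B) \<in> FX" "snd (P B) \<in> FY" unfolding FX_def FY_def using B by auto
        then have "fst q \<in> FX \<or> snd q \<in> FY" using qc unfolding cross_def by auto
        then have "f (fst q) = 1 \<or> g (snd q) = 1" using f(3) g(3) by blast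
        then have h0: "h q = 0" unfolding h_def by auto
        have s0q: "s0 q \<in> topspace Z" using SC_in_topspace[OF s0, of "fst q" "snd q"] qXY by auto
        have "t q = s0 q" unfolding t_def using qXY h0 tvs_facts[OF tvs s0q] tvs_facts[OF tvs c] by simp
        moreover have "s0 q \<in> W" using s0B WA(1) q by blast
        ultimately show ?thesis by simp
      qed
      then show ?thesis using WA(1) tSC by blast
    qed
  qed
  show ?thesis using x(1) y(1) tM F(4) txy by blast
qed



lemma pick_sep:
  assumes Haus: "Hausdorff_space Z" and two: "\<exists>z1\<in>topspace Z. \<exists>z2\<in>topspace Z. z1 \<noteq> z2"
    and z0: "z0 \<in> topspace Z"
  shows "\<exists>W c. openin Z W \<and> z0 \<in> W \<and> c \<in> topspace Z \<and> c \<notin> W"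
proof -
  obtain z1 z2 where z: "z1 \<in> topspace Z" "z2 \<in> topspace Z" "z1 \<noteq> z2" using two by blast
  obtain c where c: "c \<in> topspace Z" "c \<noteq> z0"
  proof (cases "z1 = z0")
    case True then show ?thesis using that z by metis
  next
    case False then show ?thesis using that z by metis
  qed
  have "\<exists>U V. openin Z U \<and> openin Z V \<and> z0 \<in> U \<and> c \<in> V \<and> disjnt U V"
    using Haus z0 c unfolding Hausdorff_space_def by metis
  then obtain W V where WV: "openin Z W" "openin Z V" "z0 \<in> W" "c \<in> V" "disjnt W V"
    by (elim exE conjE) (rule that)
  have "c \<notin> W" using WV(4,5) unfolding disjnt_def by blast
  then show ?thesis using WV(1,3) c(1) by blast
qed

lemma disc_e:
  fixes X :: "'a topology" and Y :: "'b topology" and Z :: "'c topology"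
  assumes crX: "completely_regular_space X" and t1X: "t1_space X" and niX: "no_isolated_points X"
    and crY: "completely_regular_space Y" and t1Y: "t1_space Y" and niY: "no_isolated_points Y"
    and tvs: "real_tvs Z add smul zero" and Haus: "Hausdorff_space Z"
    and two: "\<exists>z1\<in>topspace Z. \<exists>z2\<in>topspace Z. z1 \<noteq> z2"
    and p: "p \<in> topspace (prod_topology X (prod_topology Y (cross_open_topology X Y Z)))"
  shows "\<not> continuous_at_pt (prod_topology X (prod_topology Y (cross_open_topology X Y Z))) Z
                  (\<lambda>(x, y, s). s (x, y)) p"
proof
  let ?S = "cross_open_topology X Y Z"
  assume ct: "continuous_at_pt (prod_topology X (prod_topology Y ?S)) Z (\<lambda>(x, y, s). s (x, y)) p"
  obtain x0 y0 s0 where peq: "p = (x0, y0, s0)" by (cases p) blast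
  have x0: "x0 \<in> topspace X" and y0: "y0 \<in> topspace Y" and s0: "s0 \<in> SC X Y Z"
    using p unfolding peq by (simp_all add: topspace_cot)
  have z0: "s0 (x0, y0) \<in> topspace Z" by (rule SC_in_topspace[OF s0 x0 y0])
  obtain W c where Wc: "openin Z W" "s0 (x0,y0) \<in> W" "c \<in> topspace Z" "c \<notin> W"
    using pick_sep[OF Haus two z0] by blast
  have "\<forall>V. openin Z V \<and> (\<lambda>(x, y, s). s (x, y)) p \<in> V \<longrightarrow>
        (\<exists>N. openin (prod_topology X (prod_topology Y ?S)) N \<and> p \<in> N \<and> (\<forall>q\<in>N. (\<lambda>(x, y, s). s (x, y)) q \<in> V))"
    using ct unfolding continuous_at_pt_def by (elim conjE)
  then obtain N where N: "openin (prod_topology X (prod_topology Y ?S)) N" "p \<in> N"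
      "\<forall>q\<in>N. (\<lambda>(x, y, s). s (x, y)) q \<in> W"
    using Wc(1,2) unfolding peq by auto
  have "\<forall>x y. (x, y) \<in> N \<longrightarrow> (\<exists>U V. openin X U \<and> openin (prod_topology Y ?S) V \<and> x \<in> U \<and> y \<in> V \<and> U \<times> V \<subseteq> N)"
    using N(1) unfolding openin_prod_topology_alt .
  from this[rule_format, of x0 "(y0,s0)"] N(2) obtain U R where UR: "openin X U" "openin (prod_topology Y ?S) R"
     "x0 \<in> U" "(y0,s0) \<in> R" "U \<times> R \<subseteq> N"
    unfolding peq by blast
  have "\<forall>x y. (x, y) \<in> R \<longrightarrow> (\<exists>U V. openin Y U \<and> openin ?S V \<and> x \<in> U \<and> y \<in> V \<and> U \<times> V \<subseteq> R)"
    using UR(2) unfolding openin_prod_topology_alt .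
  from this[rule_format, of y0 s0] UR(4) obtain V M where VM: "openin Y V" "openin ?S M"
     "y0 \<in> V" "s0 \<in> M" "V \<times> M \<subseteq> R"
    by blast
  obtain x y t where xyt: "x \<in> U" "y \<in> V" "t \<in> M" "t (x,y) = c"
    using main2[OF crX t1X niX crY t1Y niY tvs s0 UR(1) UR(3) VM(1) VM(3) VM(2) VM(4) Wc(3)] by blast
  have "(x, y, t) \<in> N" using xyt UR(5) VM(5) by blast
  then have "t (x,y) \<in> W" using N(3) by fastforce
  then show False using xyt(4) Wc(4) by simp
qed

lemma disc_e1:
  fixes X :: "'a topology" and Y :: "'b topology" and Z :: "'c topology"
  assumes crX: "completely_regular_space X" and t1X: "t1_space X" and niX: "no_isolated_points X"
    and crY: "completely_regular_space Y" and t1Y: "t1_space Y" and niY: "no_isolated_points Y"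
    and tvs: "real_tvs Z add smul zero" and Haus: "Hausdorff_space Z"
    and two: "\<exists>z1\<in>topspace Z. \<exists>z2\<in>topspace Z. z1 \<noteq> z2"
    and p: "p \<in> topspace (prod_topology (prod_topology X (cross_open_topology X Y Z)) Y)"
  shows "\<not> continuous_at_pt (prod_topology (prod_topology X (cross_open_topology X Y Z)) Y) Z
                  (\<lambda>((x, s), y). s (x, y)) p"
proof
  let ?S = "cross_open_topology X Y Z"
  assume ct: "continuous_at_pt (prod_topology (prod_topology X ?S) Y) Z (\<lambda>((x, s), y). s (x, y)) p"
  obtain x0 y0 s0 where peq: "p = ((x0, s0), y0)" by (metis prod.collapse)
  have x0: "x0 \<in> topspace X" and y0: "y0 \<in> topspace Y" and s0: "s0 \<in> SC X Y Z"
    using p unfolding peq by (simp_all add: topspace_cot)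
  have z0: "s0 (x0, y0) \<in> topspace Z" by (rule SC_in_topspace[OF s0 x0 y0])
  obtain W c where Wc: "openin Z W" "s0 (x0,y0) \<in> W" "c \<in> topspace Z" "c \<notin> W"
    using pick_sep[OF Haus two z0] by blast
  have "\<forall>V. openin Z V \<and> (\<lambda>((x, s), y). s (x, y)) p \<in> V \<longrightarrow>
        (\<exists>N. openin (prod_topology (prod_topology X ?S) Y) N \<and> p \<in> N \<and> (\<forall>q\<in>N. (\<lambda>((x, s), y). s (x, y)) q \<in> V))"
    using ct unfolding continuous_at_pt_def by (elim conjE)
  then obtain N where N: "openin (prod_topology (prod_topology X ?S) Y) N" "p \<in> N"
      "\<forall>q\<in>N. (\<lambda>((x, s), y). s (x, y)) q \<in> W"
    using Wc(1,2) unfolding peq by auto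
  have "\<forall>x y. (x, y) \<in> N \<longrightarrow> (\<exists>U V. openin (prod_topology X ?S) U \<and> openin Y V \<and> x \<in> U \<and> y \<in> V \<and> U \<times> V \<subseteq> N)"
    using N(1) unfolding openin_prod_topology_alt .
  from this[rule_format, of "(x0,s0)" y0] N(2) obtain R V where RV: "openin (prod_topology X ?S) R" "openin Y V"
     "(x0,s0) \<in> R" "y0 \<in> V" "R \<times> V \<subseteq> N"
    unfolding peq by blast
  have "\<forall>x y. (x, y) \<in> R \<longrightarrow> (\<exists>U V. openin X U \<and> openin ?S V \<and> x \<in> U \<and> y \<in> V \<and> U \<times> V \<subseteq> R)"
    using RV(1) unfolding openin_prod_topology_alt .
  from this[rule_format, of x0 s0] RV(3) obtain U M where UM: "openin X U" "openin ?S M"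
     "x0 \<in> U" "s0 \<in> M" "U \<times> M \<subseteq> R"
    by blast
  obtain x y t where xyt: "x \<in> U" "y \<in> V" "t \<in> M" "t (x,y) = c"
    using main2[OF crX t1X niX crY t1Y niY tvs s0 UM(1) UM(3) RV(2) RV(4) UM(2) UM(4) Wc(3)] by blast
  have "((x, t), y) \<in> N" using xyt UM(5) RV(5) by blast
  then have "t (x,y) \<in> W" using N(3) by fastforce
  then show False using xyt(4) Wc(4) by simp
qed


theorem proposition3p1:
  fixes X :: "'a topology" and Y :: "'b topology" and Z :: "'c topology"
  assumes "regular_space Z"
  shows
    "sep_cont3 X Y (cross_open_topology X Y Z) Z (\<lambda>x y s. s (x, y))
     \<and> sep_cont2 (prod_topology X (cross_open_topology X Y Z)) Y Z (\<lambda>((x, s), y). s (x, y))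
     \<and> sep_cont2 X (prod_topology Y (cross_open_topology X Y Z)) Z (\<lambda>(x, (y, s)). s (x, y))
     \<and> ((completely_regular_space X \<and> t1_space X \<and> no_isolated_points X \<and>
          completely_regular_space Y \<and> t1_space Y \<and> no_isolated_points Y \<and>
          Hausdorff_space Z \<and> (\<exists>add smul zero. real_tvs Z add smul zero) \<and>
          (\<exists>z1\<in>topspace Z. \<exists>z2\<in>topspace Z. z1 \<noteq> z2))
        \<longrightarrow>
          (\<forall>p \<in> topspace (prod_topology X (prod_topology Y (cross_open_topology X Y Z))).
              \<not> continuous_at_pt (prod_topology X (prod_topology Y (cross_open_topology X Y Z))) Z
                  (\<lambda>(x, y, s). s (x, y)) p)
        \<and> (\<forall>p \<in> topspace (prod_topology (prod_topology X (cross_open_topology X Y Z)) Y).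
              \<not> continuous_at_pt (prod_topology (prod_topology X (cross_open_topology X Y Z)) Y) Z
                  (\<lambda>((x, s), y). s (x, y)) p)
        \<and> (\<forall>p \<in> topspace (prod_topology X (prod_topology Y (cross_open_topology X Y Z))).
              \<not> continuous_at_pt (prod_topology X (prod_topology Y (cross_open_topology X Y Z))) Z
                  (\<lambda>(x, (y, s)). s (x, y)) p))"
proof -
  let ?S = "cross_open_topology X Y Z"
  have P1: "sep_cont3 X Y ?S Z (\<lambda>x y s. s (x, y))
     \<and> sep_cont2 (prod_topology X ?S) Y Z (\<lambda>((x, s), y). s (x, y))
     \<and> sep_cont2 X (prod_topology Y ?S) Z (\<lambda>(x, (y, s)). s (x, y))"
    by (rule part1[OF assms])
  have P2: "(completely_regular_space X \<and> t1_space X \<and> no_isolated_points X \<and>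
          completely_regular_space Y \<and> t1_space Y \<and> no_isolated_points Y \<and>
          Hausdorff_space Z \<and> (\<exists>add smul zero. real_tvs Z add smul zero) \<and>
          (\<exists>z1\<in>topspace Z. \<exists>z2\<in>topspace Z. z1 \<noteq> z2))
        \<longrightarrow>
          (\<forall>p \<in> topspace (prod_topology X (prod_topology Y ?S)).
              \<not> continuous_at_pt (prod_topology X (prod_topology Y ?S)) Z
                  (\<lambda>(x, y, s). s (x, y)) p)
        \<and> (\<forall>p \<in> topspace (prod_topology (prod_topology X ?S) Y).
              \<not> continuous_at_pt (prod_topology (prod_topology X ?S) Y) Z
                  (\<lambda>((x, s), y). s (x, y)) p)
        \<and> (\<forall>p \<in> topspace (prod_topology X (prod_topology Y ?S)).
              \<not> continuous_at_pt (prod_topology X (prod_topology Y ?S)) Z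
                  (\<lambda>(x, (y, s)). s (x, y)) p)"
  proof
    assume H: "completely_regular_space X \<and> t1_space X \<and> no_isolated_points X \<and>
          completely_regular_space Y \<and> t1_space Y \<and> no_isolated_points Y \<and>
          Hausdorff_space Z \<and> (\<exists>add smul zero. real_tvs Z add smul zero) \<and>
          (\<exists>z1\<in>topspace Z. \<exists>z2\<in>topspace Z. z1 \<noteq> z2)"
    then have crX: "completely_regular_space X" and t1X: "t1_space X" and niX: "no_isolated_points X"
      and crY: "completely_regular_space Y" and t1Y: "t1_space Y" and niY: "no_isolated_points Y"
      and Haus: "Hausdorff_space Z" and ex: "\<exists>add smul zero. real_tvs Z add smul zero"
      and two: "\<exists>z1\<in>topspace Z. \<exists>z2\<in>topspace Z. z1 \<noteq> z2"
      by simp_all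
    from ex obtain add smul zero where tvs: "real_tvs Z add smul zero" by blast
    have D: "\<forall>p \<in> topspace (prod_topology X (prod_topology Y ?S)).
              \<not> continuous_at_pt (prod_topology X (prod_topology Y ?S)) Z
                  (\<lambda>(x, y, s). s (x, y)) p"
      using disc_e[OF crX t1X niX crY t1Y niY tvs Haus two] by blast
    have E: "\<forall>p \<in> topspace (prod_topology (prod_topology X ?S) Y).
              \<not> continuous_at_pt (prod_topology (prod_topology X ?S) Y) Z
                  (\<lambda>((x, s), y). s (x, y)) p"
      using disc_e1[OF crX t1X niX crY t1Y niY tvs Haus two] by blast
    show "(\<forall>p \<in> topspace (prod_topology X (prod_topology Y ?S)).
              \<not> continuous_at_pt (prod_topology X (prod_topology Y ?S)) Z
                  (\<lambda>(x, y, s). s (x, y)) p)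
        \<and> (\<forall>p \<in> topspace (prod_topology (prod_topology X ?S) Y).
              \<not> continuous_at_pt (prod_topology (prod_topology X ?S) Y) Z
                  (\<lambda>((x, s), y). s (x, y)) p)
        \<and> (\<forall>p \<in> topspace (prod_topology X (prod_topology Y ?S)).
              \<not> continuous_at_pt (prod_topology X (prod_topology Y ?S)) Z
                  (\<lambda>(x, (y, s)). s (x, y)) p)"
      using D E by (intro conjI)
  qed
  show ?thesis using P1 P2 by (elim conjE) (intro conjI)
qed

end
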